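(* Let $G$ be a word-representable graph. Then $l(G \circ K_2) \le 2\,l(G) + \kappa_G$, where $\kappa_G$ is the size of a maximum clique of $G$.
   Context: All graphs are simple and undirected. Letters $x,y$ alternate in a word $w$ if deleting all other letters from $w$ yields $xyxy\ldots$ or $yxyx\ldots$ (of either parity). A word $w$ over $V(G)$ represents $G$ if every vertex occurs in $w$ and for all distinct $x,y$, $xy\in E(G)$ iff $x,y$ alternate in $w$; $G$ is word-representable if such a word exists, and $l(G)$ is the minimum length of a word representing $G$. For a graph $G$ and a rooted graph $H$ (a graph with a distinguished root vertex), the rooted product $G\circ H$ is obtained by taking $|V(G)|$ disjoint copies of $H$, one for each vertex $v$ of $G$, and identifying each vertex $v$ of $G$ with the root of its copy of $H$. Here $K_2$ is rooted at one of its vertices. *)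

theory Defs
  imports Main
begin

definition simple_graph :: "'a set \<Rightarrow> ('a \<Rightarrow> 'a \<Rightarrow> bool) \<Rightarrow> bool" where
  "simple_graph V E \<longleftrightarrow> finite V \<and> (\<forall>x y. E x y \<longrightarrow> E y x) \<and> (\<forall>x. \<not> E x x)
     \<and> (\<forall>x y. E x y \<longrightarrow> x \<in> V \<and> y \<in> V)"

definition alternate :: "'a list \<Rightarrow> 'a \<Rightarrow> 'a \<Rightarrow> bool" where
  "alternate w x y \<longleftrightarrow>
     (let u = filter (\<lambda>z. z = x \<or> z = y) w in
        \<forall>i. Suc i < length u \<longrightarrow> u ! i \<noteq> u ! Suc i)"

definition represents :: "'a set \<Rightarrow> ('a \<Rightarrow> 'a \<Rightarrow> bool) \<Rightarrow> 'a list \<Rightarrow> bool" where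
  "represents V E w \<longleftrightarrow> set w = V \<and>
     (\<forall>x\<in>V. \<forall>y\<in>V. x \<noteq> y \<longrightarrow> (E x y \<longleftrightarrow> alternate w x y))"

definition word_representable :: "'a set \<Rightarrow> ('a \<Rightarrow> 'a \<Rightarrow> bool) \<Rightarrow> bool" where
  "word_representable V E \<longleftrightarrow> (\<exists>w. represents V E w)"

definition wr_length :: "'a set \<Rightarrow> ('a \<Rightarrow> 'a \<Rightarrow> bool) \<Rightarrow> nat" where
  "wr_length V E = (LEAST n. \<exists>w. represents V E w \<and> length w = n)"

definition is_clique :: "'a set \<Rightarrow> ('a \<Rightarrow> 'a \<Rightarrow> bool) \<Rightarrow> 'a set \<Rightarrow> bool" where
  "is_clique V E K \<longleftrightarrow> K \<subseteq> V \<and> (\<forall>x\<in>K. \<forall>y\<in>K. x \<noteq> y \<longrightarrow> E x y)"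

definition clique_number :: "'a set \<Rightarrow> ('a \<Rightarrow> 'a \<Rightarrow> bool) \<Rightarrow> nat" where
  "clique_number V E = Max {card K | K. is_clique V E K}"

text \<open>Rooted product G \<circ> K2 (K2 rooted at one end): vertex v of G is (v, True),
  the pendant vertex of its copy of K2 is (v, False).\<close>
definition rp_K2_vertices :: "'a set \<Rightarrow> ('a \<times> bool) set" where
  "rp_K2_vertices V = V \<times> UNIV"

definition rp_K2_edges :: "'a set \<Rightarrow> ('a \<Rightarrow> 'a \<Rightarrow> bool) \<Rightarrow> ('a \<times> bool) \<Rightarrow> ('a \<times> bool) \<Rightarrow> bool" where
  "rp_K2_edges V E p q \<longleftrightarrow>
     (snd p \<and> snd q \<and> E (fst p) (fst q)) \<or>
     (fst p = fst q \<and> fst p \<in> V \<and> snd p \<noteq> snd q)"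

end

theory Submission
  imports Defs
begin

definition blk :: "'a \<Rightarrow> nat \<Rightarrow> ('a \<times> bool) list" where
  "blk v c = (if c = 0 then [(v,False),(v,True),(v,False)] else if c = 1 then [(v,True)] else [(v,False),(v,True)])"

fun tr :: "'a list \<Rightarrow> 'a list \<Rightarrow> ('a \<times> bool) list" where
  "tr seen [] = []"
| "tr seen (x#xs) = blk x (count_list seen x) @ tr (x#seen) xs"

lemma alt_iff: "alternate w x y \<longleftrightarrow> successively (\<noteq>) (filter (\<lambda>z. z = x \<or> z = y) w)"
  unfolding alternate_def Let_def successively_conv_nth by simp

lemma tr_append: "tr seen (xs @ ys) = tr seen xs @ tr (rev xs @ seen) ys"
  by (induction xs arbitrary: seen) auto

lemma filter_vv: "filter (\<lambda>z. z = (v,False) \<or> z = (v,True)) (tr seen xs)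
   = concat (map (blk v) [count_list seen v..<count_list seen v + count_list xs v])"
proof (induction xs arbitrary: seen)
  case Nil then show ?case by simp
next
  case (Cons x xs)
  show ?case
  proof (cases "x = v")
    case True
    then show ?thesis using Cons[of "x#seen"] by (simp add: upt_conv_Cons blk_def)
  next
    case False
    have "filter (\<lambda>z. z = (v,False) \<or> z = (v,True)) (blk x c) = []" for c
      using False by (simp add: blk_def)
    then show ?thesis using Cons[of "x#seen"] False by simp
  qed
qed

lemma blk_alt: "concat (map (blk v) [0..<Suc k]) \<noteq> [] \<and>
   last (concat (map (blk v) [0..<Suc k])) = (if k = 0 then (v,False) else (v,True)) \<and>
   successively (\<noteq>) (concat (map (blk v) [0..<Suc k]))"
proof (induction k)
  case 0 then show ?case by (simp add: blk_def)
next
  case (Suc k)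
  have e: "concat (map (blk v) [0..<Suc (Suc k)]) = concat (map (blk v) [0..<Suc k]) @ blk v (Suc k)"
    by simp
  have b: "blk v (Suc k) = (if k = 0 then [(v,True)] else [(v,False),(v,True)])"
    by (simp add: blk_def)
  show ?case unfolding e b using Suc
    by (auto simp del: upt_Suc simp add: successively_append_iff)
qed

lemma filter_TT: "x \<noteq> y \<Longrightarrow> filter (\<lambda>z. z = (x,True) \<or> z = (y,True)) (tr seen xs)
   = map (\<lambda>z. (z,True)) (filter (\<lambda>z. z = x \<or> z = y) xs)"
  by (induction xs arbitrary: seen) (auto simp: blk_def)

lemma set_tr: "set (tr seen xs) \<subseteq> set xs \<times> UNIV"
  by (induction xs arbitrary: seen) (auto simp: blk_def)

lemma set_tr2: "(x,True) \<in> set (tr seen xs) \<longleftrightarrow> x \<in> set xs"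
  by (induction xs arbitrary: seen) (auto simp: blk_def)

lemma first_occ: assumes "v \<in> set w"
  obtains A B where "filter P (tr [] w) = filter P A @ filter P [(v,False),(v,True),(v,False)] @ filter P B"
proof -
  obtain xs ys where w: "w = xs @ v # ys" and "v \<notin> set xs"
    using assms split_list_first by metis
  then have "count_list (rev xs) v = 0" by simp
  then show ?thesis using that[of "tr [] xs" "tr (v # rev xs) ys"]
    unfolding w tr_append by (simp add: blk_def)
qed

lemma not_alt_F: assumes "v \<in> set w" "q \<noteq> (v,False)" "q \<noteq> (v,True)"
  shows "\<not> alternate (tr [] w) (v,False) q"
proof -
  let ?P = "\<lambda>z. z = (v,False) \<or> z = q"
  obtain A B where e: "filter ?P (tr [] w) = filter ?P A @ filter ?P [(v,False),(v,True),(v,False)] @ filter ?P B"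
    using first_occ[OF assms(1)] by blast
  have "filter ?P [(v,False),(v,True),(v,False)] = [(v,False),(v,False)]" using assms by auto
  then show ?thesis unfolding alt_iff e by (simp add: successively_append_iff)
qed

definition hh :: "nat \<Rightarrow> nat" where "hh k = 2*k + (if k = 1 then 1 else 0)"

lemma hh_step: "hh (Suc c) = hh c + length (blk x c)"
  by (simp add: hh_def blk_def)

lemma sum_hh_Cons: assumes "finite S" "x \<in> S"
  shows "(\<Sum>v\<in>S. hh (count_list (x#L) v)) = (\<Sum>v\<in>S. hh (count_list L v)) + length (blk x (count_list L x))"
proof -
  have "(\<Sum>v\<in>S. hh (count_list (x#L) v)) = (\<Sum>v\<in>S. hh (count_list L v) + (if v = x then length (blk x (count_list L x)) else 0))"
    by (rule sum.cong) (auto simp: hh_step)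
  also have "\<dots> = (\<Sum>v\<in>S. hh (count_list L v)) + length (blk x (count_list L x))"
    using assms by (simp add: sum.distrib)
  finally show ?thesis .
qed

lemma len_tr: "finite S \<Longrightarrow> set xs \<subseteq> S \<Longrightarrow>
  length (tr seen xs) + (\<Sum>v\<in>S. hh (count_list seen v)) = (\<Sum>v\<in>S. hh (count_list (rev xs @ seen) v))"
proof (induction xs arbitrary: seen)
  case Nil then show ?case by simp
next
  case (Cons x xs)
  have "length (tr seen (x#xs)) + (\<Sum>v\<in>S. hh (count_list seen v))
      = length (tr (x#seen) xs) + (\<Sum>v\<in>S. hh (count_list (x#seen) v))"
    using sum_hh_Cons[of S x seen] Cons.prems by simp
  also have "\<dots> = (\<Sum>v\<in>S. hh (count_list (rev xs @ x # seen) v))"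
    using Cons.IH[of "x#seen"] Cons.prems by (simp del: count_list.simps)
  finally show ?case by simp
qed

lemma sum_count: "finite S \<Longrightarrow> set L \<subseteq> S \<Longrightarrow> (\<Sum>v\<in>S. count_list L v) = length L"
proof (induction L)
  case Nil then show ?case by simp
next
  case (Cons x L)
  have "(\<Sum>v\<in>S. count_list (x#L) v) = (\<Sum>v\<in>S. count_list L v + (if v = x then 1 else 0))"
    by (rule sum.cong) auto
  then show ?case using Cons by (simp add: sum.distrib)
qed

lemma len_tr0: "length (tr [] w) = 2 * length w + card {v \<in> set w. count_list w v = 1}"
proof -
  have "length (tr [] w) = (\<Sum>v\<in>set w. hh (count_list w v))"
    using len_tr[of "set w" w "[]"] by (simp add: hh_def)
  also have "\<dots> = 2 * (\<Sum>v\<in>set w. count_list w v) + (\<Sum>v\<in>set w. if count_list w v = 1 then 1 else 0)"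
    by (simp add: hh_def sum.distrib sum_distrib_left)
  also have "\<dots> = 2 * length w + card {v \<in> set w. count_list w v = 1}"
    by (simp add: sum_count sum.If_cases Int_def conj_commute)
  finally show ?thesis .
qed

lemma count_filter: "P u \<Longrightarrow> count_list (filter P w) u = count_list w u"
  by (induction w) auto

lemma singles_alt: assumes "count_list w u = 1" "count_list w v = 1" "u \<noteq> v"
  shows "alternate w u v"
proof -
  let ?f = "filter (\<lambda>z. z = u \<or> z = v) w"
  have cu: "count_list ?f u = 1" and cv: "count_list ?f v = 1"
    using assms by (auto simp: count_filter)
  have "length ?f = (\<Sum>z\<in>{u,v}. count_list ?f z)"
    by (rule sum_count[symmetric]) auto
  then have l: "length ?f = 2" using cu cv assms(3) by simp
  then obtain a b where ab: "?f = [a,b]"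
    by (metis (no_types, lifting) One_nat_def Suc_1 length_0_conv length_Suc_conv)
  have "a \<noteq> b" using cu cv ab assms(3) by (cases "a = u") auto
  then show ?thesis unfolding alt_iff ab by simp
qed

lemma alternate_sym: "alternate w x y = alternate w y x"
  unfolding alternate_def by (simp add: disj_commute)

lemma edges_sym: "simple_graph V E \<Longrightarrow> rp_K2_edges V E p q = rp_K2_edges V E q p"
  unfolding rp_K2_edges_def simple_graph_def by auto

lemma rep_tr: assumes G: "simple_graph V E" and r: "represents V E w"
  shows "represents (rp_K2_vertices V) (rp_K2_edges V E) (tr [] w)"
proof -
  have sw: "set w = V" using r by (simp add: represents_def)
  have F: "rp_K2_edges V E (a,False) q = alternate (tr [] w) (a,False) q"
    if a: "a \<in> V" and qn: "q \<noteq> (a,False)" for a q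
  proof (cases "q = (a,True)")
    case True
    have "a \<in> set w" using a sw by simp
    then have "count_list w a \<noteq> 0" by (simp add: count_list_0_iff)
    then obtain k where k: "count_list w a = Suc k" by (cases "count_list w a") auto
    have "alternate (tr [] w) (a,False) (a,True)"
    proof -
      have "filter (\<lambda>z. z = (a,False) \<or> z = (a,True)) (tr [] w) = concat (map (blk a) [0..<Suc k])"
        using filter_vv[of a "[]" w] k by (simp del: upt_Suc)
      then show ?thesis unfolding alt_iff using blk_alt[of a k] by (simp del: upt_Suc)
    qed
    then show ?thesis using True a by (simp add: rp_K2_edges_def)
  next
    case False
    have "a \<in> set w" using a sw by simp
    then have "\<not> alternate (tr [] w) (a,False) q" using not_alt_F[OF _ qn False] by blast
    moreover have "\<not> rp_K2_edges V E (a,False) q"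
    proof
      assume "rp_K2_edges V E (a,False) q"
      then have "fst q = a" "snd q" unfolding rp_K2_edges_def by auto
      then have "q = (a,True)" by (cases q) simp
      then show False using False by simp
    qed
    ultimately show ?thesis by simp
  qed
  have T: "rp_K2_edges V E (a,True) (b,True) = alternate (tr [] w) (a,True) (b,True)"
    if "a \<in> V" "b \<in> V" "a \<noteq> b" for a b
  proof -
    have "alternate (tr [] w) (a,True) (b,True) = alternate w a b"
      unfolding alt_iff filter_TT[OF that(3)] successively_map by simp
    also have "\<dots> = E a b" using r that by (simp add: represents_def)
    finally show ?thesis using that by (simp add: rp_K2_edges_def)
  qed
  have set1: "set (tr [] w) \<subseteq> V \<times> UNIV" using set_tr[of "[]" w] sw by simp
  have set2: "(a,b) \<in> set (tr [] w)" if av: "a \<in> V" for a b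
  proof (cases b)
    case True then show ?thesis using set_tr2[of a "[]" w] that sw by simp
  next
    case False
    have "a \<in> set w" using av sw by simp
    then obtain A B where "filter (\<lambda>_. True) (tr [] w) = filter (\<lambda>_. True) A @ filter (\<lambda>_. True) [(a,False),(a,True),(a,False)] @ filter (\<lambda>_. True) B"
      by (rule first_occ)
    then show ?thesis using False by simp
  qed
  have "set (tr [] w) = V \<times> UNIV" using set1 set2 by auto
  moreover have "rp_K2_edges V E p q = alternate (tr [] w) p q"
    if "p \<in> V \<times> UNIV" "q \<in> V \<times> UNIV" "p \<noteq> q" for p q
  proof -
    obtain a s where p: "p = (a,s)" by (cases p)
    obtain b t where q: "q = (b,t)" by (cases q)
    show ?thesis
    proof (cases s)
      case False then show ?thesis using F[of a q] that p by auto
    next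
      case True
      show ?thesis
      proof (cases t)
        case False
        have "rp_K2_edges V E q p = alternate (tr [] w) q p" using F[of b p] that q False by auto
        then show ?thesis using edges_sym[OF G, of p q] alternate_sym[of _ p q] by simp
      next
        case tT: True
        then show ?thesis using T[of a b] that p q True by auto
      qed
    qed
  qed
  ultimately show ?thesis unfolding represents_def rp_K2_vertices_def by simp
qed

theorem mainTheorem9:
  fixes V :: "'a set" and E :: "'a \<Rightarrow> 'a \<Rightarrow> bool"
  assumes "simple_graph V E"
    and "word_representable V E"
  shows "wr_length (rp_K2_vertices V) (rp_K2_edges V E)
           \<le> 2 * wr_length V E + clique_number V E"
proof -
  have "\<exists>n w. represents V E w \<and> length w = n" using assms(2) word_representable_def by blast
  then have "\<exists>w. represents V E w \<and> length w = wr_length V E"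
    unfolding wr_length_def by (rule LeastI_ex)
  then obtain w where r: "represents V E w" and lw: "length w = wr_length V E" by blast
  have sw: "set w = V" using r by (simp add: represents_def)
  have fV: "finite V" using assms(1) by (simp add: simple_graph_def)
  define K where "K = {v \<in> set w. count_list w v = 1}"
  have cl: "is_clique V E K"
    unfolding is_clique_def K_def using r singles_alt sw by (auto simp: represents_def)
  have fin: "finite {card K | K. is_clique V E K}"
  proof -
    have "{card K | K. is_clique V E K} \<subseteq> card ` Pow V" by (auto simp: is_clique_def)
    then show ?thesis using fV finite_subset by blast
  qed
  have cK: "card K \<le> clique_number V E"
    unfolding clique_number_def using cl fin by (auto intro!: Max_ge)
  have "wr_length (rp_K2_vertices V) (rp_K2_edges V E) \<le> length (tr [] w)"
    unfolding wr_length_def using rep_tr[OF assms(1) r] by (auto intro!: Least_le)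
  also have "\<dots> = 2 * wr_length V E + card K" by (simp add: len_tr0 lw K_def)
  finally show ?thesis using cK by simp
qed

end
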